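(* The action of $W_d(\mathbb C)$ on $L^{(d-1)}\cap U_d(\mathbb C)$ is free.
   Context: Fix $d\ge2$. $V=\mathbb C^d\oplus\mathfrak{so}(d,\mathbb C)$, elements $(v,M)$ with $v=(c_1,\dots,c_d)^\top$, $M$ complex skew-symmetric, $M_{ij}=c_{ij}=-M_{ji}$ for $i<j$; $O_d(\mathbb C)=\{A:AA^\top=I\}$ acts by $A\cdot(v,M)=(Av,AMA^\top)$. $W_d(\mathbb C)$ is the group of diagonal matrices with entries in $\{-1,1\}$. $L^{(1)}=\{c_1=\dots=c_{d-1}=0\}$, and for $2\le i\le d-1$, $L^{(i)}=\{(v,M)\in L^{(i-1)}:c_{k(d-i+2)}=0,\ 1\le k\le d-i\}$ (so on $L^{(d-1)}$ only $c_d,c_{12},c_{23},\dots,c_{(d-1)d}$ can be nonzero). Let $f_1=c_1^2+\dots+c_d^2$; for $2\le i\le d-1$ let $f_i$ be the $O_d(\mathbb C)$-invariant rational function on $V$ with $f_i|_{L^{(i-1)}}=c_{1(d-i+2)}^2+\dots+c_{(d-i+1)(d-i+2)}^2$; let $f_d$ be the invariant rational function with $f_d|_{L^{(d-1)}}=c_{12}^2$ (these exist and are uniquely determined). $U_d(\mathbb C)$ is the set of points in the domain of every $f_k$ with $\prod_kf_k\neq0$. A group action is free if every stabilizer is trivial. *)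

theory Defs
  imports Complex_Main
begin

text \<open>Points of V = C^d (+) so(d,C): a vector v (indices 1..d, zero elsewhere)
  and a skew-symmetric matrix M (indices 1..d, zero elsewhere); c_i = v i, c_ij = M i j.\<close>

type_synonym pt = "(nat \<Rightarrow> complex) \<times> (nat \<Rightarrow> nat \<Rightarrow> complex)"
type_synonym cmat = "nat \<Rightarrow> nat \<Rightarrow> complex"

definition Vsp :: "nat \<Rightarrow> pt set" where
  "Vsp d = {(v, M). (\<forall>i. i \<notin> {1..d} \<longrightarrow> v i = 0)
                  \<and> (\<forall>i j. M i j = - M j i)
                  \<and> (\<forall>i j. i \<notin> {1..d} \<or> j \<notin> {1..d} \<longrightarrow> M i j = 0)}"

definition idm :: "nat \<Rightarrow> cmat" where
  "idm d = (\<lambda>i j. if i = j \<and> i \<in> {1..d} then 1 else 0)"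

definition mmul :: "nat \<Rightarrow> cmat \<Rightarrow> cmat \<Rightarrow> cmat" where
  "mmul d A B = (\<lambda>i j. \<Sum>k=1..d. A i k * B k j)"

definition mvmul :: "nat \<Rightarrow> cmat \<Rightarrow> (nat \<Rightarrow> complex) \<Rightarrow> (nat \<Rightarrow> complex)" where
  "mvmul d A v = (\<lambda>i. \<Sum>k=1..d. A i k * v k)"

definition mtrans :: "cmat \<Rightarrow> cmat" where
  "mtrans A = (\<lambda>i j. A j i)"

definition Od :: "nat \<Rightarrow> cmat set" where
  "Od d = {A. (\<forall>i j. i \<notin> {1..d} \<or> j \<notin> {1..d} \<longrightarrow> A i j = 0)
             \<and> mmul d A (mtrans A) = idm d}"

definition act :: "nat \<Rightarrow> cmat \<Rightarrow> pt \<Rightarrow> pt" where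
  "act d A x = (mvmul d A (fst x), mmul d (mmul d A (snd x)) (mtrans A))"

definition Wd :: "nat \<Rightarrow> cmat set" where
  "Wd d = {A. \<exists>e. (\<forall>i\<in>{1..d}. e i = 1 \<or> e i = -1)
                 \<and> A = (\<lambda>i j. if i = j \<and> i \<in> {1..d} then e i else 0)}"

fun Lset :: "nat \<Rightarrow> nat \<Rightarrow> pt set" where
  "Lset d 0 = Vsp d"
| "Lset d (Suc 0) = {x \<in> Vsp d. \<forall>j\<in>{1..d-1}. fst x j = 0}"
| "Lset d (Suc (Suc i)) =
     {x \<in> Lset d (Suc i). \<forall>k\<in>{1..d - Suc (Suc i)}. snd x k (d - Suc (Suc i) + 2) = 0}"

inductive_set polyfun :: "(pt \<Rightarrow> complex) set" where
  pf_const: "(\<lambda>x. c) \<in> polyfun"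
| pf_vcoord: "(\<lambda>x. fst x i) \<in> polyfun"
| pf_mcoord: "(\<lambda>x. snd x i j) \<in> polyfun"
| pf_add: "p \<in> polyfun \<Longrightarrow> q \<in> polyfun \<Longrightarrow> (\<lambda>x. p x + q x) \<in> polyfun"
| pf_mult: "p \<in> polyfun \<Longrightarrow> q \<in> polyfun \<Longrightarrow> (\<lambda>x. p x * q x) \<in> polyfun"

text \<open>A rational function on V, modelled as a partial function (None = undefined).\<close>
definition is_ratfun :: "nat \<Rightarrow> (pt \<Rightarrow> complex option) \<Rightarrow> bool" where
  "is_ratfun d F \<longleftrightarrow>
     (\<exists>p q. p \<in> polyfun \<and> q \<in> polyfun \<and> (\<exists>x\<in>Vsp d. q x \<noteq> 0) \<and>
        (\<forall>x. x \<notin> Vsp d \<longrightarrow> F x = None) \<and>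
        (\<forall>x\<in>Vsp d. F x \<noteq> None \<longleftrightarrow>
            (\<exists>p' q'. p' \<in> polyfun \<and> q' \<in> polyfun \<and> q' x \<noteq> 0 \<and>
                     (\<forall>y\<in>Vsp d. p' y * q y = p y * q' y))) \<and>
        (\<forall>x\<in>Vsp d. \<forall>p' q'. p' \<in> polyfun \<longrightarrow> q' \<in> polyfun \<longrightarrow> q' x \<noteq> 0 \<longrightarrow>
                     (\<forall>y\<in>Vsp d. p' y * q y = p y * q' y) \<longrightarrow> F x = Some (p' x / q' x)))"

definition dom_rf :: "(pt \<Rightarrow> complex option) \<Rightarrow> pt set" where
  "dom_rf F = {x. F x \<noteq> None}"

definition Od_invariant :: "nat \<Rightarrow> (pt \<Rightarrow> complex option) \<Rightarrow> bool" where
  "Od_invariant d F \<longleftrightarrow> (\<forall>A\<in>Od d. \<forall>x\<in>Vsp d. F (act d A x) = F x)"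

definition f1 :: "nat \<Rightarrow> pt \<Rightarrow> complex option" where
  "f1 d x = (if x \<in> Vsp d then Some (\<Sum>i=1..d. (fst x i)^2) else None)"

text \<open>Restriction of f_k to L^(k-1), for 2 <= k <= d:
  c_{1(d-k+2)}^2 + ... + c_{(d-k+1)(d-k+2)}^2 ; for k = d this is c_12^2.\<close>
definition grestr :: "nat \<Rightarrow> nat \<Rightarrow> pt \<Rightarrow> complex" where
  "grestr d k x = (if k = d then (snd x 1 2)^2
                   else (\<Sum>j=1..d-k+1. (snd x j (d-k+2))^2))"

definition is_fk :: "nat \<Rightarrow> nat \<Rightarrow> (pt \<Rightarrow> complex option) \<Rightarrow> bool" where
  "is_fk d k F \<longleftrightarrow> is_ratfun d F \<and> Od_invariant d F \<and>
     Lset d (k-1) \<inter> dom_rf F \<noteq> {} \<and>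
     (\<forall>x\<in>Lset d (k-1) \<inter> dom_rf F. F x = Some (grestr d k x))"

definition Ud :: "nat \<Rightarrow> (nat \<Rightarrow> pt \<Rightarrow> complex option) \<Rightarrow> pt set" where
  "Ud d F = {x \<in> Vsp d. (\<forall>k\<in>{1..d}. F k x \<noteq> None) \<and> (\<Prod>k=1..d. the (F k x)) \<noteq> 0}"

definition free_on :: "nat \<Rightarrow> cmat set \<Rightarrow> pt set \<Rightarrow> bool" where
  "free_on d G S \<longleftrightarrow> (\<forall>x\<in>S. \<forall>A\<in>G. act d A x = x \<longrightarrow> A = idm d)"

end

theory Submission
  imports Defs
begin

lemma Lset_step: "Lset d (Suc i) \<subseteq> Lset d i"
  by (cases i) auto

lemma Lset_mono: "i \<le> j \<Longrightarrow> Lset d j \<subseteq> Lset d i"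
proof (induction j)
  case 0 then show ?case by simp
next
  case (Suc j)
  then show ?case using Lset_step[of d j]
    by (metis le_Suc_eq order_refl order_trans)
qed

lemma mvmul_diag:
  "mvmul d (\<lambda>i j. if i = j \<and> i \<in> {1..d} then e i else 0) v i
   = (if i \<in> {1..d} then e i * v i else 0)"
proof -
  have h: "(\<lambda>k. (if i = k \<and> i \<in> {1..d} then e i else 0) * v k)
      = (\<lambda>k. if k = i then (if i \<in> {1..d} then e i * v i else 0) else 0)" (is "?L = ?R") by auto
  have "(\<Sum>k=1..d. ?L k) = (\<Sum>k=1..d. ?R k)" by (simp only: h)
  then show ?thesis unfolding mvmul_def by (simp add: sum.delta)
qed

lemma mmul_diag_l:
  "mmul d (\<lambda>i j. if i = j \<and> i \<in> {1..d} then e i else 0) M i j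
   = (if i \<in> {1..d} then e i * M i j else 0)"
proof -
  have h: "(\<lambda>k. (if i = k \<and> i \<in> {1..d} then e i else 0) * M k j)
      = (\<lambda>k. if k = i then (if i \<in> {1..d} then e i * M i j else 0) else 0)" (is "?L = ?R") by auto
  have "(\<Sum>k=1..d. ?L k) = (\<Sum>k=1..d. ?R k)" by (simp only: h)
  then show ?thesis unfolding mmul_def by (simp add: sum.delta)
qed

lemma mmul_diag_r:
  "mmul d B (mtrans (\<lambda>i j. if i = j \<and> i \<in> {1..d} then e i else 0)) i j
   = (if j \<in> {1..d} then B i j * e j else 0)"
proof -
  have h: "(\<lambda>k. B i k * (if j = k \<and> j \<in> {1..d} then e j else 0))
      = (\<lambda>k. if k = j then (if j \<in> {1..d} then B i j * e j else 0) else 0)" (is "?L = ?R") by auto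
  have "(\<Sum>k=1..d. ?L k) = (\<Sum>k=1..d. ?R k)" by (simp only: h)
  then show ?thesis unfolding mmul_def mtrans_def by (simp add: sum.delta)
qed

theorem proposition3p8:
  fixes d :: nat and f :: "nat \<Rightarrow> pt \<Rightarrow> complex option"
  assumes "d \<ge> 2"
    and "f 1 = f1 d"
    and "\<forall>k\<in>{2..d}. is_fk d k (f k)"
  shows "free_on d (Wd d) (Lset d (d - 1) \<inter> Ud d f)"
  unfolding free_on_def
proof (intro ballI impI)
  fix x A
  assume xS: "x \<in> Lset d (d - 1) \<inter> Ud d f" and AW: "A \<in> Wd d" and fx: "act d A x = x"
  from AW obtain e where e: "\<forall>i\<in>{1..d}. e i = 1 \<or> e i = -1"
    and Ae: "A = (\<lambda>i j. if i = j \<and> i \<in> {1..d} then e i else 0)"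
    unfolding Wd_def by blast
  have xL: "x \<in> Lset d (d - 1)" and xU: "x \<in> Ud d f" using xS by auto
  have xL': "\<And>k. k \<le> d - 1 \<Longrightarrow> x \<in> Lset d k" using xL Lset_mono by blast
  have xV: "x \<in> Vsp d" using xL'[of 0] by simp
  have def: "\<forall>k\<in>{1..d}. f k x \<noteq> None" and pr: "(\<Prod>k=1..d. the (f k x)) \<noteq> 0"
    using xU unfolding Ud_def by auto
  have nz: "\<And>k. k \<in> {1..d} \<Longrightarrow> the (f k x) \<noteq> 0" using pr by auto
  have fk: "\<And>k. k \<in> {2..d} \<Longrightarrow> f k x = Some (grestr d k x)"
  proof -
    fix k assume k: "k \<in> {2..d}"
    then have "is_fk d k (f k)" using assms(3) by auto
    moreover have "x \<in> Lset d (k-1)" using xL' k by auto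
    moreover have "x \<in> dom_rf (f k)" using def k unfolding dom_rf_def by auto
    ultimately show "f k x = Some (grestr d k x)" unfolding is_fk_def by blast
  qed
  have x1: "\<forall>j\<in>{1..d-1}. fst x j = 0"
    using xL'[of 1] assms(1) by simp
  have vd: "fst x d \<noteq> 0"
  proof -
    have s: "{1..d} = insert d {1..d-1}" using assms(1) by auto
    have "(\<Sum>i=1..d. (fst x i)^2) = (fst x d)^2 + (\<Sum>i=1..d-1. (fst x i)^2)"
      unfolding s by (subst sum.insert) auto
    also have "\<dots> = (fst x d)^2" using x1 by simp
    finally have "the (f 1 x) = (fst x d)^2" using assms(2) xV unfolding f1_def by simp
    then show ?thesis using nz[of 1] assms(1) by auto
  qed
  have Mi: "\<And>i. i \<in> {1..d-1} \<Longrightarrow> snd x i (Suc i) \<noteq> 0"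
  proof -
    fix i assume i: "i \<in> {1..d-1}"
    show "snd x i (Suc i) \<noteq> 0"
    proof (cases "i = 1")
      case True
      have "the (f d x) = (snd x 1 2)^2" using fk[of d] assms(1) unfolding grestr_def by simp
      then show ?thesis using nz[of d] assms(1) True by (auto simp: numeral_2_eq_2)
    next
      case False
      define k where "k = d - i + 1"
      have k: "k \<in> {2..d-1}" using i False k_def by auto
      have kk: "Suc (Suc (k-2)) = k" using k by auto
      have "x \<in> Lset d (Suc (Suc (k-2)))" unfolding kk using xL'[of k] k by simp
      then have z: "\<forall>j\<in>{1..i-1}. snd x j (Suc i) = 0"
        using k k_def i False by (auto simp: Suc_diff_Suc numeral_2_eq_2)
      have g: "grestr d k x = (\<Sum>j=1..i. (snd x j (Suc i))^2)"
      proof -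
        have a: "k \<noteq> d" "d - k + 1 = i" "d - k + 2 = Suc i" using k k_def i by auto
        show ?thesis unfolding grestr_def a(2,3) using a(1) by simp
      qed
      have s: "{1..i} = insert i {1..i-1}" using False i by auto
      have "(\<Sum>j=1..i. (snd x j (Suc i))^2) = (snd x i (Suc i))^2 + (\<Sum>j=1..i-1. (snd x j (Suc i))^2)"
        unfolding s by (subst sum.insert) auto
      also have "\<dots> = (snd x i (Suc i))^2" using z by simp
      finally have "the (f k x) = (snd x i (Suc i))^2" using k g fk[of k] by auto
      moreover have "k \<in> {1..d}" using k by auto
      ultimately show ?thesis using nz[of k] by auto
    qed
  qed
  have fv: "\<And>i. fst (act d A x) i = fst x i" and fm: "\<And>i j. snd (act d A x) i j = snd x i j"
    using fx by auto
  have ed: "e d = 1"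
  proof -
    have "fst (act d A x) d = e d * fst x d"
      unfolding act_def Ae fst_conv mvmul_diag using assms(1) by simp
    then have "e d * fst x d = fst x d" using fv[of d] by simp
    then show ?thesis using vd by simp
  qed
  have eq: "\<And>i. i \<in> {1..d-1} \<Longrightarrow> e i = e (Suc i)"
  proof -
    fix i assume i: "i \<in> {1..d-1}"
    have "e i * snd x i (Suc i) * e (Suc i) = snd x i (Suc i)"
    proof -
      have "snd (act d A x) i (Suc i) = e i * snd x i (Suc i) * e (Suc i)"
      proof -
        have "i \<in> {1..d}" "Suc i \<in> {1..d}" using i by auto
        then show ?thesis unfolding act_def Ae snd_conv mmul_diag_r mmul_diag_l
          by (simp only: if_True)
      qed
      then show ?thesis using fm[of i "Suc i"] by simp
    qed
    then have "e i * e (Suc i) = 1" using Mi[OF i]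
      by (metis mult.commute mult.left_commute mult_cancel_left2)
    have "e (Suc i) = 1 \<or> e (Suc i) = -1" using e i by auto
    then have "e (Suc i) * e (Suc i) = 1" by auto
    with \<open>e i * e (Suc i) = 1\<close> show "e i = e (Suc i)"
      by (metis mult.assoc mult_1 mult_1_right)
  qed
  have all1: "\<And>n. n < d \<Longrightarrow> e (d - n) = 1"
  proof -
    fix n show "n < d \<Longrightarrow> e (d - n) = 1"
    proof (induction n)
      case 0 then show ?case using ed by simp
    next
      case (Suc n)
      have "d - Suc n \<in> {1..d-1}" using Suc.prems by auto
      then have "e (d - Suc n) = e (Suc (d - Suc n))" using eq[of "d - Suc n"] by blast
      moreover have "Suc (d - Suc n) = d - n" using Suc by auto
      ultimately show ?case using Suc by auto
    qed
  qed
  have "\<And>i. i \<in> {1..d} \<Longrightarrow> e i = 1"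
  proof -
    fix i assume "i \<in> {1..d}"
    then show "e i = 1" using all1[of "d - i"] by auto
  qed
  then show "A = idm d" unfolding Ae idm_def by (auto intro!: ext)
qed

end
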